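(* Let $\widehat{\mathbf{H}}_u,\mathbf{L}_1\in\mathbb{R}^{N_s\times N_b}$, $\lambda>0$, $\gamma_u\ge0$, $\beta_u\in\mathbb{R}$, $\mu_0>0$, $\rho>1$, $\mu_{\max}\ge\mu_0$. Let $f(\mathbf{L})=\|\mathbf{L}\|_*+\gamma_u\|\mathbf{L}-\beta_u\mathbf{L}_1\|_F^2$ and $g(\mathbf{S})=\lambda\|\mathbf{S}\|_1$, and consider the sequence $\{(\mathbf{L}_u^k,\mathbf{S}_u^k,\mathbf{Y}^k)\}_{k\ge0}$ generated from $\mathbf{S}_u^0=\mathbf{0}$, $\mathbf{Y}^0=\mathbf{0}$ by $$\mathbf{L}_u^{k+1}=\arg\min_{\mathbf{L}} f(\mathbf{L})+\tfrac{\mu_k}{2}\bigl\|\mathbf{L}-(\widehat{\mathbf{H}}_u-\mathbf{S}_u^k+\tfrac{1}{\mu_k}\mathbf{Y}^k)\bigr\|_F^2,$$ $$\mathbf{S}_u^{k+1}=\arg\min_{\mathbf{S}} g(\mathbf{S})+\tfrac{\mu_k}{2}\bigl\|\mathbf{S}-(\widehat{\mathbf{H}}_u-\mathbf{L}_u^{k+1}+\tfrac{1}{\mu_k}\mathbf{Y}^k)\bigr\|_F^2,$$ $$\mathbf{Y}^{k+1}=\mathbf{Y}^k+\mu_k(\widehat{\mathbf{H}}_u-\mathbf{L}_u^{k+1}-\mathbf{S}_u^{k+1}),\qquad \mu_{k+1}=\min\{\rho\mu_k,\mu_{\max}\}.$$ Then the sequence $\{\mathbf{Y}^k\}$ is 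bounded.
   Context: $\|\cdot\|_*$ is the nuclear norm, $\|\cdot\|_1$ the entrywise $\ell_1$-norm, $\|\cdot\|_F$ the Frobenius norm. These iterations are the ADMM scheme for $\min_{\mathbf{L},\mathbf{S}} f(\mathbf{L})+g(\mathbf{S})$ subject to $\mathbf{L}+\mathbf{S}=\widehat{\mathbf{H}}_u$. *)

theory Defs
  imports "Jordan_Normal_Form.Char_Poly"
begin

definition frob_norm :: "real mat \<Rightarrow> real" where
  "frob_norm A = sqrt (\<Sum>i<dim_row A. \<Sum>j<dim_col A. (A $$ (i,j))\<^sup>2)"

definition l1_norm :: "real mat \<Rightarrow> real" where
  "l1_norm A = (\<Sum>i<dim_row A. \<Sum>j<dim_col A. \<bar>A $$ (i,j)\<bar>)"

(* nuclear norm = sum of singular values, counted with multiplicity.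
   The singular values squared are the eigenvalues (roots of the characteristic
   polynomial, with multiplicity) of A^T A. *)
definition nuclear_norm :: "real mat \<Rightarrow> real" where
  "nuclear_norm A =
     (let p = char_poly (transpose_mat A * A) in
      \<Sum>x\<in>{x. poly p x = 0}. of_nat (order x p) * sqrt x)"

end

theory Submission
  imports Defs
begin

lemma sum2_change:
  fixes p q :: "nat \<Rightarrow> nat \<Rightarrow> real"
  assumes "\<And>a b. a < n \<Longrightarrow> b < m \<Longrightarrow> (a, b) \<noteq> (i, j) \<Longrightarrow> p a b = q a b" "i < n" "j < m"
  shows "(\<Sum>a<n. \<Sum>b<m. p a b) = (\<Sum>a<n. \<Sum>b<m. q a b) + p i j - q i j"
proof -
  have "(\<Sum>a<n. \<Sum>b<m. p a b) - (\<Sum>a<n. \<Sum>b<m. q a b) = (\<Sum>a<n. \<Sum>b<m. p a b - q a b)"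
    by (simp add: sum_subtractf)
  also have "\<dots> = (\<Sum>a<n. if a = i then (\<Sum>b<m. if b = j then p i j - q i j else 0) else 0)"
  proof (intro sum.cong refl)
    fix a assume a: "a \<in> {..<n}"
    show "(\<Sum>b<m. p a b - q a b) = (if a = i then (\<Sum>b<m. if b = j then p i j - q i j else 0) else 0)"
    proof (cases "a = i")
      case True
      have "(\<Sum>b<m. p i b - q i b) = (\<Sum>b<m. if b = j then p i j - q i j else 0)"
        by (rule sum.cong) (use a True in \<open>auto simp: assms(1)\<close>)
      then show ?thesis using True by simp
    next
      case False
      then show ?thesis using a by (auto intro!: sum.neutral simp: assms(1))
    qed
  qed
  also have "\<dots> = p i j - q i j" using assms(2,3) by (simp add: sum.delta)
  finally show ?thesis by simp
qed

lemma frob_sq: "(frob_norm A)\<^sup>2 = (\<Sum>i<dim_row A. \<Sum>j<dim_col A. (A $$ (i,j))\<^sup>2)"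
  unfolding frob_norm_def by (simp add: sum_nonneg)

lemma key:
  fixes S T :: "real mat"
  assumes S: "S \<in> carrier_mat n m" and T: "T \<in> carrier_mat n m" and mu: "mu > 0" and lam: "lam > 0"
    and opt: "\<And>X. X \<in> carrier_mat n m \<Longrightarrow> lam * l1_norm S + mu / 2 * (frob_norm (S - T))\<^sup>2
        \<le> lam * l1_norm X + mu / 2 * (frob_norm (X - T))\<^sup>2"
    and ij: "i < n" "j < m"
  shows "mu * \<bar>T $$ (i,j) - S $$ (i,j)\<bar> \<le> 2 * lam"
proof -
  define X where "X = mat n m (\<lambda>(a,b). if a = i \<and> b = j then T $$ (i,j) else S $$ (a,b))"
  have Xc: "X \<in> carrier_mat n m" unfolding X_def by simp
  have l1: "l1_norm X = l1_norm S + \<bar>T $$ (i,j)\<bar> - \<bar>S $$ (i,j)\<bar>"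
    unfolding l1_norm_def using S ij
    by (subst sum2_change[where i=i and j=j]) (auto simp: X_def)
  have fr: "(frob_norm (X - T))\<^sup>2 = (frob_norm (S - T))\<^sup>2 + 0 - (S $$ (i,j) - T $$ (i,j))\<^sup>2"
    unfolding frob_sq using S T ij Xc
    by (subst sum2_change[where i=i and j=j]) (auto simp: X_def)
  define d where "d = T $$ (i,j) - S $$ (i,j)"
  have "lam * l1_norm S + mu / 2 * (frob_norm (S - T))\<^sup>2
        \<le> lam * l1_norm X + mu / 2 * (frob_norm (X - T))\<^sup>2" using opt Xc by blast
  hence "mu / 2 * d\<^sup>2 \<le> lam * (\<bar>T $$ (i,j)\<bar> - \<bar>S $$ (i,j)\<bar>)"
    unfolding l1 fr d_def by (simp add: algebra_simps power2_commute)
  also have "\<dots> \<le> lam * \<bar>d\<bar>" unfolding d_def using lam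
    by (intro mult_left_mono) auto
  finally have h: "mu / 2 * d\<^sup>2 \<le> lam * \<bar>d\<bar>" .
  show ?thesis
  proof (cases "d = 0")
    case True then show ?thesis using lam by (simp add: d_def)
  next
    case False
    hence "\<bar>d\<bar> > 0" by simp
    moreover have "(mu * \<bar>d\<bar>) * \<bar>d\<bar> \<le> (2 * lam) * \<bar>d\<bar>"
      using h by (simp add: power2_eq_square algebra_simps abs_mult_self_eq)
    ultimately show ?thesis by (simp add: d_def)
  qed
qed

theorem lemma1:
  fixes Ns Nb :: nat
    and H L1 :: "real mat"
    and lam gam beta mu0 rho mumax :: real
    and L S Y :: "nat \<Rightarrow> real mat"
    and mu :: "nat \<Rightarrow> real"
    and f g :: "real mat \<Rightarrow> real"
  assumes H: "H \<in> carrier_mat Ns Nb" and L1: "L1 \<in> carrier_mat Ns Nb"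
    and lam: "lam > 0" and gam: "gam \<ge> 0" and mu0: "mu0 > 0" and rho: "rho > 1"
    and mumax: "mumax \<ge> mu0"
    and f_def: "\<And>X. f X = nuclear_norm X + gam * (frob_norm (X - beta \<cdot>\<^sub>m L1))\<^sup>2"
    and g_def: "\<And>X. g X = lam * l1_norm X"
    and S0: "S 0 = 0\<^sub>m Ns Nb" and Y0: "Y 0 = 0\<^sub>m Ns Nb"
    and mu_0: "mu 0 = mu0"
    and mu_Suc: "\<And>k. mu (Suc k) = min (rho * mu k) mumax"
    and L_car: "\<And>k. L (Suc k) \<in> carrier_mat Ns Nb"
    and L_min: "\<And>k X. X \<in> carrier_mat Ns Nb \<Longrightarrow>
        f (L (Suc k)) + mu k / 2 * (frob_norm (L (Suc k) - (H - S k + (1 / mu k) \<cdot>\<^sub>m Y k)))\<^sup>2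
        \<le> f X + mu k / 2 * (frob_norm (X - (H - S k + (1 / mu k) \<cdot>\<^sub>m Y k)))\<^sup>2"
    and S_car: "\<And>k. S (Suc k) \<in> carrier_mat Ns Nb"
    and S_min: "\<And>k X. X \<in> carrier_mat Ns Nb \<Longrightarrow>
        g (S (Suc k)) + mu k / 2 * (frob_norm (S (Suc k) - (H - L (Suc k) + (1 / mu k) \<cdot>\<^sub>m Y k)))\<^sup>2
        \<le> g X + mu k / 2 * (frob_norm (X - (H - L (Suc k) + (1 / mu k) \<cdot>\<^sub>m Y k)))\<^sup>2"
    and Y_Suc: "\<And>k. Y (Suc k) = Y k + mu k \<cdot>\<^sub>m (H - L (Suc k) - S (Suc k))"
  shows "\<exists>B. \<forall>k. frob_norm (Y k) \<le> B"
proof -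
  have mupos: "mu k > 0" for k
    by (induction k) (use mu0 rho mumax mu_0 mu_Suc in auto)
  have Ycar: "Y (Suc k) \<in> carrier_mat Ns Nb" for k
    using Y_Suc[of k] S_car[of k] by auto
  have Yk_dims: "Y k \<in> carrier_mat Ns Nb" for k
    by (cases k) (use Y0 Ycar in auto)
  have entry: "\<bar>Y (Suc k) $$ (i,j)\<bar> \<le> 2 * lam" if ij: "i < Ns" "j < Nb" for k i j
  proof -
    define T where "T = H - L (Suc k) + (1 / mu k) \<cdot>\<^sub>m Y k"
    have Tc: "T \<in> carrier_mat Ns Nb" unfolding T_def using H L_car[of k] Yk_dims[of k] by auto
    have "mu k * \<bar>T $$ (i,j) - S (Suc k) $$ (i,j)\<bar> \<le> 2 * lam"
      by (rule key[OF S_car Tc mupos lam _ ij]) (use S_min g_def in \<open>auto simp: T_def\<close>)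
    moreover have "Y (Suc k) $$ (i,j) = mu k * (T $$ (i,j) - S (Suc k) $$ (i,j))"
      unfolding Y_Suc T_def using ij H L_car[of k] Yk_dims[of k] S_car[of k] mupos[of k]
      by (simp add: field_simps)
    ultimately show ?thesis using mupos[of k] by (simp add: abs_mult)
  qed
  define B where "B = sqrt (real Ns * real Nb * (2 * lam)\<^sup>2)"
  have "frob_norm (Y k) \<le> B" for k
  proof (cases k)
    case 0 then show ?thesis by (simp add: Y0 frob_norm_def B_def)
  next
    case (Suc k')
    have "(\<Sum>i<Ns. \<Sum>j<Nb. (Y k $$ (i,j))\<^sup>2) \<le> (\<Sum>i<Ns. \<Sum>j<Nb. (2 * lam)\<^sup>2)"
      unfolding Suc
      by (intro sum_mono) (metis entry lessThan_iff abs_le_square_iff abs_of_pos lam mult_pos_pos zero_less_numeral)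
    then show ?thesis unfolding frob_norm_def B_def using Yk_dims[of k]
      by (simp add: real_sqrt_le_iff)
  qed
  then show ?thesis by blast
qed

end
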